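(* Let $r,c\ge1$, $n=r+c$, $X_1,X_2$ as below, and $1\le K\le 2^{\min(r,c)}$. For every quantum algorithm $\mathcal A$ making $T$ queries to $\varphi$ and $\varphi^{-1}$, if for every permutation $\varphi$ of $\{0,1\}^n$ with exactly $K$ $X$-pairs $\mathcal A$ outputs an $X$-pair $(x,y)\in X_1\times X_2$ with $\varphi(x)=y$ with probability at least $\epsilon>0$, then $$\epsilon\le\frac{8(T+1)^2K}{2^{\min(r,c)}}.$$
   Context: $X_1\subset\{0,1\}^n$ is the set of strings ending in $0^c$, $X_2\subset\{0,1\}^n$ the set of strings beginning with $0^r$; an $X$-pair of $\varphi$ is $(x,y)\in X_1\times X_2$ with $\varphi(x)=y$. Queries are to the unitaries $O_\varphi:|a\rangle|b\rangle\mapsto|a\rangle|b\oplus\varphi(a)\rangle$ and $O_{\varphi^{-1}}:|a\rangle|b\rangle\mapsto|a\rangle|b\oplus\varphi^{-1}(a)\rangle$; success probability is over the algorithm's randomness and measurements. *)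

theory Defs
  imports Complex_Main "HOL-Combinatorics.Permutations"
begin

text \<open>Bit strings of length n are encoded as naturals below 2^n, most significant
bit first (so the first bit of x is bit n-1 of the number).\<close>

definition bitstrings :: "nat \<Rightarrow> nat set" where
  "bitstrings n = {..<2^n}"

text \<open>X1: strings of length n = r + c ending in 0^c (last c bits zero).\<close>
definition X1 :: "nat \<Rightarrow> nat \<Rightarrow> nat set" where
  "X1 r c = {x \<in> bitstrings (r + c). x mod 2^c = 0}"

text \<open>X2: strings of length n = r + c beginning with 0^r (first r bits zero).\<close>
definition X2 :: "nat \<Rightarrow> nat \<Rightarrow> nat set" where
  "X2 r c = {y \<in> bitstrings (r + c). y < 2^c}"

definition Xpairs :: "nat \<Rightarrow> nat \<Rightarrow> (nat \<Rightarrow> nat) \<Rightarrow> (nat \<times> nat) set" where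
  "Xpairs r c \<phi> = {(x, y). x \<in> X1 r c \<and> y \<in> X2 r c \<and> \<phi> x = y}"

text \<open>Computational basis of the algorithm's register: (control bit, query input a,
query output b, workspace w) with a, b < 2^n and w < m. The control bit selects
whether a query is made to phi (False) or to phi inverse (True).\<close>
type_synonym idx = "bool \<times> nat \<times> nat \<times> nat"
type_synonym qstate = "idx \<Rightarrow> complex"
type_synonym qop = "idx \<Rightarrow> idx \<Rightarrow> complex"

definition basis_set :: "nat \<Rightarrow> nat \<Rightarrow> idx set" where
  "basis_set n m = UNIV \<times> {..<2^n} \<times> {..<2^n} \<times> {..<m}"

definition unitary_on :: "idx set \<Rightarrow> qop \<Rightarrow> bool" where
  "unitary_on B U \<longleftrightarrow>
     (\<forall>i\<in>B. \<forall>j\<in>B. (\<Sum>k\<in>B. cnj (U k i) * U k j) = (if i = j then 1 else 0))"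

definition apply_op :: "idx set \<Rightarrow> qop \<Rightarrow> qstate \<Rightarrow> qstate" where
  "apply_op B U \<psi> = (\<lambda>i. \<Sum>j\<in>B. U i j * \<psi> j)"

definition query :: "(nat \<Rightarrow> nat) \<Rightarrow> qstate \<Rightarrow> qstate" where
  "query \<phi> \<psi> = (\<lambda>(c, a, b, w). \<psi> (c, a, xor b ((if c then inv \<phi> else \<phi>) a), w))"

fun run :: "nat \<Rightarrow> nat \<Rightarrow> (nat \<Rightarrow> qop) \<Rightarrow> (nat \<Rightarrow> nat) \<Rightarrow> nat \<Rightarrow> qstate" where
  "run n m U \<phi> 0 = apply_op (basis_set n m) (U 0) (\<lambda>i. if i = (False, 0, 0, 0) then 1 else 0)"
| "run n m U \<phi> (Suc t) = apply_op (basis_set n m) (U (Suc t)) (query \<phi> (run n m U \<phi> t))"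

definition success_prob ::
  "nat \<Rightarrow> nat \<Rightarrow> nat \<Rightarrow> (nat \<Rightarrow> qop) \<Rightarrow> (idx \<Rightarrow> nat \<times> nat) \<Rightarrow> (nat \<Rightarrow> nat) \<Rightarrow> (nat \<times> nat) set \<Rightarrow> real" where
  "success_prob n m T U out \<phi> S =
     (\<Sum>i\<in>{i \<in> basis_set n m. out i \<in> S}. (cmod (run n m U \<phi> T i))^2)"

end

theory Submission imports Defs "HOL-Analysis.L2_Norm" begin


lemma pm_lemma: "(p::nat) \<ge> 2 \<Longrightarrow> (p+1) mod p = 1"
proof -
  assume p: "p \<ge> 2"
  have "(p+1) mod p = (1 + p) mod p" by (simp add: add.commute)
  also have "\<dots> = 1 mod p" by (rule mod_add_self2)
  also have "\<dots> = 1" using p by simp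
  finally show ?thesis .
qed

lemma pd_lemma: "(p::nat) \<ge> 2 \<Longrightarrow> (p+1) div p = 1"
proof -
  assume p: "p \<ge> 2"
  have "(p+1) div p = (1 + p) div p" by (simp add: add.commute)
  also have "\<dots> = 1 div p + 1" using p by (intro div_add_self2) simp
  also have "\<dots> = 1" using p by simp
  finally show ?thesis .
qed

definition FJ :: "nat \<Rightarrow> nat set \<Rightarrow> nat \<Rightarrow> nat" where
  "FJ p J x = (if x mod p = 0 \<and> x div p \<in> J then x div p
     else if x < p \<and> x \<in> J then x * p
     else if x = 0 then p + 1
     else if x = p + 1 then (if 0 \<in> J then p + 1 else 0)
     else x)"

lemma FJ1: "x mod p = 0 \<Longrightarrow> x div p \<in> J \<Longrightarrow> FJ p J x = x div p"
  unfolding FJ_def by simp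
lemma FJ2: "\<not> (x mod p = 0 \<and> x div p \<in> J) \<Longrightarrow> x < p \<Longrightarrow> x \<in> J \<Longrightarrow> FJ p J x = x * p"
  unfolding FJ_def by simp
lemma FJ3: "\<not> (x mod p = 0 \<and> x div p \<in> J) \<Longrightarrow> \<not> (x < p \<and> x \<in> J) \<Longrightarrow> x = 0 \<Longrightarrow> FJ p J x = p + 1"
  unfolding FJ_def by simp
lemma FJ4: "\<not> (x mod p = 0 \<and> x div p \<in> J) \<Longrightarrow> \<not> (x < p \<and> x \<in> J) \<Longrightarrow> x \<noteq> 0 \<Longrightarrow> x = p + 1
   \<Longrightarrow> FJ p J x = (if 0 \<in> J then p + 1 else 0)"
  unfolding FJ_def by (auto split: if_split)
lemma FJ5: "\<not> (x mod p = 0 \<and> x div p \<in> J) \<Longrightarrow> \<not> (x < p \<and> x \<in> J) \<Longrightarrow> x \<noteq> 0 \<Longrightarrow> x \<noteq> p + 1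
   \<Longrightarrow> FJ p J x = x"
  unfolding FJ_def by (auto split: if_split)

lemma FJ_e:
  assumes p: "p \<ge> 2"
  shows "FJ p J (p + 1) = (if 0 \<in> J then p + 1 else 0)"
proof -
  have pm: "(p+1) mod p = 1" using p by (rule pm_lemma)
  show ?thesis by (rule FJ4) (use pm in auto)
qed

lemma FJ_0:
  assumes p: "p \<ge> 2"
  shows "FJ p J 0 = (if 0 \<in> J then 0 else p + 1)"
proof (cases "0 \<in> J")
  case True then show ?thesis using FJ1[of 0 p J] by simp
next
  case False then show ?thesis using FJ3[of 0 p J] by simp
qed

lemma FJ_invol:
  assumes p: "p \<ge> 2" and J: "J \<subseteq> {..<p}"
  shows "FJ p J (FJ p J x) = x"
proof -
  have pm: "(p+1) mod p = 1" using p by (rule pm_lemma)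
  show ?thesis
  proof (cases "x mod p = 0 \<and> x div p \<in> J")
    case True
    define j where "j = x div p"
    have fx: "FJ p J x = j" using FJ1 True j_def by simp
    have xj: "x = j * p" using True j_def by (metis add.right_neutral div_mult_mod_eq)
    have jp: "j < p" "j \<in> J" using J True j_def by auto
    show ?thesis
    proof (cases "j = 0")
      case True
      then show ?thesis using fx xj jp FJ1[of 0 p J] by simp
    next
      case False
      have "j mod p = j" using jp by simp
      then have "\<not> (j mod p = 0 \<and> j div p \<in> J)" using False by simp
      then have "FJ p J j = j * p" using FJ2 jp by blast
      then show ?thesis using fx xj by simp
    qed
  next
    case F1: False
    show ?thesis
    proof (cases "x < p \<and> x \<in> J")
      case True
      have fx: "FJ p J x = x * p" using FJ2 F1 True by blast
      have "(x * p) mod p = 0" "(x * p) div p = x" using p by auto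
      then have "FJ p J (x * p) = x" using FJ1 True by simp
      then show ?thesis using fx by simp
    next
      case F2: False
      show ?thesis
      proof (cases "x = 0")
        case True
        have "0 \<notin> J" using F1 True by simp
        then show ?thesis using True FJ_0[OF p] FJ_e[OF p] by simp
      next
        case F3: False
        show ?thesis
        proof (cases "x = p + 1")
          case True
          then show ?thesis using FJ_0[OF p] FJ_e[OF p] by simp
        next
          case False
          have fx: "FJ p J x = x" using FJ5 F1 F2 F3 False by blast
          then show ?thesis by simp
        qed
      qed
    qed
  qed
qed

lemma FJ_cases:
  "FJ p J x = x div p \<or> (x \<in> J \<and> FJ p J x = x * p) \<or> FJ p J x = p + 1 \<or> FJ p J x = 0 \<or> FJ p J x = x"
  unfolding FJ_def by auto

lemma FJ_range:
  assumes p: "p \<ge> 2" and J: "J \<subseteq> {..<q}" and q: "q \<le> p" and R: "q * p \<le> R" and e: "p + 1 < R"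
    and x: "x < R"
  shows "FJ p J x < R"
proof -
  have a: "x div p < R" using x by (meson div_le_dividend le_less_trans)
  have b: "x * p < R" if "x \<in> J"
  proof -
    have "x < q" using that J by auto
    then have "x * p < q * p" by (rule mult_less_mono1) (use p in simp)
    then show ?thesis using R by linarith
  qed
  show ?thesis using FJ_cases[of p J x] a b e x by auto
qed

lemma FJ_out:
  assumes p: "p \<ge> 2" and J: "J \<subseteq> {..<q}" and q: "q \<le> p" and R: "q * p \<le> R" and e: "p + 1 < R"
    and x: "x \<ge> R"
  shows "FJ p J x = x"
proof -
  have "x div p \<notin> J"
  proof
    assume "x div p \<in> J"
    then have "x div p + 1 \<le> q" using J by auto
    then have "(x div p + 1) * p \<le> q * p" by (rule mult_le_mono1)
    moreover have "x < (x div p + 1) * p"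
    proof -
      have h1: "x = x div p * p + x mod p" by simp
      moreover have "x mod p < p" using p by simp
      ultimately have "x < x div p * p + p" by linarith
      then show ?thesis by (simp add: distrib_right)
    qed
    ultimately show False using x R by simp
  qed
  then show ?thesis using FJ5[of x p J] x e q R p by simp
qed

lemma FJ_permutes:
  assumes p: "p \<ge> 2" and J: "J \<subseteq> {..<q}" and q: "q \<le> p" and R: "q * p \<le> R" and "p + 1 < R"
  shows "FJ p J permutes {..<R}"
proof -
  have J': "J \<subseteq> {..<p}" using J q by auto
  have inv: "FJ p J (FJ p J x) = x" for x by (rule FJ_invol[OF p J'])
  show ?thesis unfolding permutes_def
  proof (intro conjI allI impI)
    fix x assume "x \<notin> {..<R}" then show "FJ p J x = x" using FJ_out[OF assms] by simp
  next
    fix y show "\<exists>!x. FJ p J x = y"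
    proof
      show "FJ p J (FJ p J y) = y" by (rule inv)
    next
      fix x assume "FJ p J x = y" then show "x = FJ p J y" using inv by metis
    qed
  qed
qed

lemma FJ_inv:
  assumes p: "p \<ge> 2" and J: "J \<subseteq> {..<p}"
  shows "inv (FJ p J) = FJ p J"
  by (rule inv_equality) (use FJ_invol[OF assms] in auto)

definition SJ :: "nat \<Rightarrow> nat set \<Rightarrow> nat set" where
  "SJ p J = (\<lambda>j. j * p) ` J \<union> J \<union> (if 0 \<in> J then {p + 1} else {})"

lemma FJ_same:
  assumes p: "p \<ge> 2" and xS: "x \<notin> SJ p J"
  shows "FJ p J x = FJ p {} x"
proof -
  have h1: "\<not> (x mod p = 0 \<and> x div p \<in> J)"
  proof
    assume a: "x mod p = 0 \<and> x div p \<in> J"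
    then have "x = x div p * p" by (metis add.right_neutral div_mult_mod_eq)
    then have "x \<in> (\<lambda>j. j * p) ` J" using a by blast
    then show False using xS unfolding SJ_def by blast
  qed
  have h2: "\<not> (x < p \<and> x \<in> J)" using xS unfolding SJ_def by blast
  have h1': "\<not> (x mod p = 0 \<and> x div p \<in> {})" "\<not> (x < p \<and> x \<in> {})" by auto
  show ?thesis
  proof (cases "x = 0")
    case True then show ?thesis using FJ3[OF h1 h2] FJ3[OF h1'] by simp
  next
    case F: False
    show ?thesis
    proof (cases "x = p + 1")
      case True
      then have "0 \<notin> J" using xS unfolding SJ_def by auto
      then show ?thesis using FJ4[OF h1 h2 F True] FJ4[OF h1' F True] by simp
    next
      case False
      then show ?thesis using FJ5[OF h1 h2 F False] FJ5[OF h1' F False] by simp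
    qed
  qed
qed

lemma SJ_key:
  assumes p: "p \<ge> 2" and K: "K \<subseteq> {..<p}" and x: "x \<in> SJ p K"
  shows "(if x = p + 1 then 0 else if x < p then x else x div p) \<in> K"
proof -
  have pm: "(p+1) mod p = 1" using p by (rule pm_lemma)
  have b: "j * p \<noteq> p + 1" for j
  proof
    assume "j * p = p + 1"
    then have "(p+1) mod p = (j * p) mod p" by (rule arg_cong[where f="\<lambda>t. t mod p", symmetric])
    moreover have "(j * p) mod p = 0" by (rule mod_mult_self2_is_0)
    ultimately show False using pm by (metis zero_neq_one)
  qed
  have "x \<in> (\<lambda>j. j * p) ` K \<or> x \<in> K \<or> x \<in> (if 0 \<in> K then {p + 1} else {})"
    using x unfolding SJ_def by blast
  moreover
  { assume "x \<in> (\<lambda>j. j * p) ` K"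
    then obtain j where j: "j \<in> K" "x = j * p" by blast
    have ?thesis
    proof (cases "j = 0")
      case True then show ?thesis using j p by simp
    next
      case False
      then have j1: "1 \<le> j" by simp
      then have "1 * p \<le> j * p" by (rule mult_le_mono1)
      then have h2: "\<not> x < p" using j j1 by simp
      have h1: "x \<noteq> p + 1" using b[of j] j(2) by simp
      have h3: "x div p = j" using j p by simp
      have "(if x = p + 1 then 0 else if x < p then x else x div p) = x div p"
        by (rule trans[OF if_not_P[OF h1] if_not_P[OF h2]])
      then show ?thesis using h3 j(1) by simp
    qed }
  moreover
  { assume xK: "x \<in> K"
    then have "x < p" using K by auto
    then have ?thesis using xK by simp }
  moreover
  { assume "x \<in> (if 0 \<in> K then {p + 1} else {})"
    then have "0 \<in> K" "x = p + 1" by (auto split: if_splits)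
    then have ?thesis by simp }
  ultimately show ?thesis by blast
qed

lemma SJ_disj:
  assumes p: "p \<ge> 2" and J: "J \<subseteq> {..<p}" and J': "J' \<subseteq> {..<p}" and dis: "J \<inter> J' = {}"
  shows "SJ p J \<inter> SJ p J' = {}"
  using SJ_key[OF p J] SJ_key[OF p J'] dis by blast


definition nrm :: "idx set \<Rightarrow> qstate \<Rightarrow> real" where
  "nrm A f = L2_set (\<lambda>i. cmod (f i)) A"

lemma nrm_sq: "(nrm A f)^2 = (\<Sum>i\<in>A. (cmod (f i))^2)"
  unfolding nrm_def L2_set_def by (simp add: sum_nonneg)

lemma nrm_tri: "nrm A (\<lambda>i. f i + g i) \<le> nrm A f + nrm A g"
proof -
  have "nrm A (\<lambda>i. f i + g i) \<le> L2_set (\<lambda>i. cmod (f i) + cmod (g i)) A"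
    unfolding nrm_def by (rule L2_set_mono) (auto simp: norm_triangle_ineq)
  also have "\<dots> \<le> nrm A f + nrm A g" unfolding nrm_def by (rule L2_set_triangle_ineq)
  finally show ?thesis .
qed

lemma nrm_sub_tri: "nrm A (\<lambda>i. f i - h i) \<le> nrm A (\<lambda>i. f i - g i) + nrm A (\<lambda>i. g i - h i)"
  using nrm_tri[of A "\<lambda>i. f i - g i" "\<lambda>i. g i - h i"] by simp

lemma nrm_mono_set: "finite B \<Longrightarrow> A \<subseteq> B \<Longrightarrow> nrm A f \<le> nrm B f"
  unfolding nrm_def L2_set_def by (intro real_sqrt_le_mono sum_mono2) auto

lemma delta_sum:
  fixes f :: "idx \<Rightarrow> complex"
  assumes "finite B" "j \<in> B"
  shows "(\<Sum>i\<in>B. f i * (if i = j then 1 else 0)) = f j"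
proof -
  have "(\<Sum>i\<in>B. f i * (if i = j then 1 else 0)) = (\<Sum>i\<in>B. if i = j then f i else 0)"
    by (intro sum.cong) auto
  also have "\<dots> = f j" using assms by (simp add: sum.delta)
  finally show ?thesis .
qed

lemma apply_op_sum:
  assumes B: "finite B" and U: "unitary_on B U"
  shows "(\<Sum>k\<in>B. (cmod (apply_op B U \<psi> k))^2) = (\<Sum>j\<in>B. (cmod (\<psi> j))^2)"
proof -
  have s1: "complex_of_real (\<Sum>k\<in>B. (cmod (apply_op B U \<psi> k))^2)
      = (\<Sum>k\<in>B. apply_op B U \<psi> k * cnj (apply_op B U \<psi> k))"
    by (simp only: of_real_sum complex_norm_square)
  have s2: "apply_op B U \<psi> k * cnj (apply_op B U \<psi> k)
      = (\<Sum>j\<in>B. \<Sum>i\<in>B. (U k j * \<psi> j) * (cnj (U k i) * cnj (\<psi> i)))" for k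
    unfolding apply_op_def cnj_sum complex_cnj_mult by (rule sum_product)
  have s3: "(\<Sum>k\<in>B. \<Sum>j\<in>B. \<Sum>i\<in>B. (U k j * \<psi> j) * (cnj (U k i) * cnj (\<psi> i)))
      = (\<Sum>j\<in>B. \<Sum>i\<in>B. \<Sum>k\<in>B. (U k j * \<psi> j) * (cnj (U k i) * cnj (\<psi> i)))"
    by (subst sum.swap, rule sum.cong[OF refl], rule sum.swap)
  have s4: "(\<Sum>k\<in>B. (U k j * \<psi> j) * (cnj (U k i) * cnj (\<psi> i)))
      = (\<psi> j * cnj (\<psi> i)) * (\<Sum>k\<in>B. cnj (U k i) * U k j)" for i j
    unfolding sum_distrib_left by (rule sum.cong[OF refl]) (simp only: ac_simps)
  have s5: "(\<Sum>j\<in>B. \<Sum>i\<in>B. (\<psi> j * cnj (\<psi> i)) * (\<Sum>k\<in>B. cnj (U k i) * U k j))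
      = (\<Sum>j\<in>B. \<psi> j * cnj (\<psi> j))"
  proof (rule sum.cong[OF refl])
    fix j assume j: "j \<in> B"
    have "(\<Sum>i\<in>B. (\<psi> j * cnj (\<psi> i)) * (\<Sum>k\<in>B. cnj (U k i) * U k j))
        = (\<Sum>i\<in>B. (\<psi> j * cnj (\<psi> i)) * (if i = j then 1 else 0))"
      using U j unfolding unitary_on_def by (intro sum.cong refl) simp
    also have "\<dots> = \<psi> j * cnj (\<psi> j)" by (rule delta_sum[OF B j])
    finally show "(\<Sum>i\<in>B. (\<psi> j * cnj (\<psi> i)) * (\<Sum>k\<in>B. cnj (U k i) * U k j)) = \<psi> j * cnj (\<psi> j)" .
  qed
  have s6: "(\<Sum>j\<in>B. \<psi> j * cnj (\<psi> j)) = complex_of_real (\<Sum>j\<in>B. (cmod (\<psi> j))^2)"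
    by (simp only: of_real_sum complex_norm_square)
  have "complex_of_real (\<Sum>k\<in>B. (cmod (apply_op B U \<psi> k))^2) = complex_of_real (\<Sum>j\<in>B. (cmod (\<psi> j))^2)"
    unfolding s1 s2 s3 s4 s5 s6 by (rule refl)
  then show ?thesis using of_real_eq_iff by blast
qed

lemma apply_op_nrm: "finite B \<Longrightarrow> unitary_on B U \<Longrightarrow> nrm B (apply_op B U \<psi>) = nrm B \<psi>"
  unfolding nrm_def L2_set_def using apply_op_sum by simp

lemma apply_op_diff: "apply_op B U f i - apply_op B U g i = apply_op B U (\<lambda>j. f j - g j) i"
  unfolding apply_op_def by (simp add: sum_subtractf right_diff_distrib)

definition hq :: "(nat \<Rightarrow> nat) \<Rightarrow> idx \<Rightarrow> idx" where
  "hq \<phi> = (\<lambda>(c, a, b, w). (c, a, xor b ((if c then inv \<phi> else \<phi>) a), w))"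

lemma query_hq: "query \<phi> \<psi> i = \<psi> (hq \<phi> i)"
  by (cases i) (simp add: query_def hq_def)

lemma query_hq': "query \<phi> \<psi> = (\<lambda>i. \<psi> (hq \<phi> i))"
  by (rule ext) (rule query_hq)

lemma xor_lt: "(b::nat) < 2^n \<Longrightarrow> v < 2^n \<Longrightarrow> xor b v < 2^n"
  by (metis take_bit_nat_eq_self_iff take_bit_xor)

lemma xor_cancel: "xor (xor (b::nat) v) v = b"
  by (simp add: xor.assoc)

definition rng :: "nat \<Rightarrow> (nat \<Rightarrow> nat) \<Rightarrow> bool" where
  "rng n \<phi> \<longleftrightarrow> (\<forall>a<2^n. \<phi> a < 2^n \<and> inv \<phi> a < 2^n)"

lemma hq_invol: "hq \<phi> (hq \<phi> i) = i"
  by (cases i) (simp add: hq_def xor_cancel)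

lemma hq_in: "rng n \<phi> \<Longrightarrow> i \<in> basis_set n m \<Longrightarrow> hq \<phi> i \<in> basis_set n m"
  by (cases i) (auto simp: hq_def basis_set_def rng_def xor_lt)

lemma hq_fst: "fst (snd (hq \<phi> i)) = fst (snd i)"
  by (cases i) (simp add: hq_def)

lemma sum_hq:
  assumes "rng n \<phi>"
  shows "(\<Sum>i\<in>{i\<in>basis_set n m. P (fst (snd i))}. g (hq \<phi> i))
       = (\<Sum>i\<in>{i\<in>basis_set n m. P (fst (snd i))}. g i)"
  by (rule sum.reindex_bij_witness[where i="hq \<phi>" and j="hq \<phi>"])
     (auto simp: hq_invol hq_fst hq_in[OF assms])

lemma query_sum:
  assumes "rng n \<phi>"
  shows "(\<Sum>i\<in>basis_set n m. (cmod (query \<phi> \<psi> i))^2) = (\<Sum>i\<in>basis_set n m. (cmod (\<psi> i))^2)"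
  using sum_hq[OF assms, where P="\<lambda>_. True" and m=m and g="\<lambda>i. (cmod (\<psi> i))^2"] by (simp add: query_hq)

lemma query_nrm: "rng n \<phi> \<Longrightarrow> nrm (basis_set n m) (query \<phi> \<psi>) = nrm (basis_set n m) \<psi>"
  unfolding nrm_def L2_set_def using query_sum by simp

lemma finite_basis: "finite (basis_set n m)"
  unfolding basis_set_def by simp

lemma sq_ineq: "((a::real) + b)^2 \<le> 2 * a^2 + 2 * b^2"
proof -
  have "0 \<le> (a - b)^2" by simp
  moreover have "(a+b)^2 = a^2 + 2*a*b + b^2" by (simp add: power2_eq_square algebra_simps)
  moreover have "(a-b)^2 = a^2 - 2*a*b + b^2" by (simp add: power2_eq_square algebra_simps)
  ultimately show ?thesis by linarith
qed

lemma query_diff_bound: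
  assumes r1: "rng n \<phi>1" and r2: "rng n \<phi>2"
    and same: "\<And>a. a \<notin> S \<Longrightarrow> \<phi>1 a = \<phi>2 a \<and> inv \<phi>1 a = inv \<phi>2 a"
  shows "(nrm (basis_set n m) (\<lambda>i. query \<phi>1 \<psi> i - query \<phi>2 \<psi> i))^2
     \<le> 4 * (\<Sum>i\<in>{i\<in>basis_set n m. fst (snd i) \<in> S}. (cmod (\<psi> i))^2)"
proof -
  let ?B = "basis_set n m"
  let ?A = "{i\<in>?B. fst (snd i) \<in> S}"
  let ?f = "\<lambda>i. (cmod (\<psi> (hq \<phi>1 i) - \<psi> (hq \<phi>2 i)))^2"
  have z: "\<And>i. i \<in> ?B - ?A \<Longrightarrow> ?f i = 0"
  proof -
    fix i assume "i \<in> ?B - ?A"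
    then have "hq \<phi>1 i = hq \<phi>2 i" using same by (cases i) (auto simp: hq_def)
    then show "?f i = 0" by simp
  qed
  have "(nrm ?B (\<lambda>i. query \<phi>1 \<psi> i - query \<phi>2 \<psi> i))^2 = (\<Sum>i\<in>?B. ?f i)"
    by (simp add: nrm_sq query_hq)
  also have "\<dots> = (\<Sum>i\<in>?A. ?f i)"
    using z by (intro sum.mono_neutral_right finite_basis) auto
  also have "\<dots> \<le> (\<Sum>i\<in>?A. 2 * (cmod (\<psi> (hq \<phi>1 i)))^2 + 2 * (cmod (\<psi> (hq \<phi>2 i)))^2)"
  proof (intro sum_mono)
    fix i
    have "cmod (\<psi> (hq \<phi>1 i) - \<psi> (hq \<phi>2 i)) \<le> cmod (\<psi> (hq \<phi>1 i)) + cmod (\<psi> (hq \<phi>2 i))"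
      by (rule norm_triangle_ineq4)
    then have "?f i \<le> (cmod (\<psi> (hq \<phi>1 i)) + cmod (\<psi> (hq \<phi>2 i)))^2"
      by (intro power_mono) auto
    also have "\<dots> \<le> 2 * (cmod (\<psi> (hq \<phi>1 i)))^2 + 2 * (cmod (\<psi> (hq \<phi>2 i)))^2"
      by (rule sq_ineq)
    finally show "?f i \<le> \<dots>" .
  qed
  also have "\<dots> = 2 * (\<Sum>i\<in>?A. (cmod (\<psi> (hq \<phi>1 i)))^2) + 2 * (\<Sum>i\<in>?A. (cmod (\<psi> (hq \<phi>2 i)))^2)"
    by (simp add: sum.distrib sum_distrib_left)
  also have "\<dots> = 4 * (\<Sum>i\<in>?A. (cmod (\<psi> i))^2)"
    using sum_hq[OF r1, where P="\<lambda>a. a \<in> S" and m=m and g="\<lambda>i. (cmod (\<psi> i))^2"]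
          sum_hq[OF r2, where P="\<lambda>a. a \<in> S" and m=m and g="\<lambda>i. (cmod (\<psi> i))^2"] by linarith
  finally show ?thesis .
qed

lemma run0_indep: "run n m U \<phi> 0 = run n m U \<phi>' 0" by simp

lemma hybrid:
  assumes r1: "rng n \<phi>" and r2: "rng n \<phi>0"
    and U: "\<forall>t\<le>T. unitary_on (basis_set n m) (U t)"
  shows "t \<le> T \<Longrightarrow> nrm (basis_set n m) (\<lambda>i. run n m U \<phi> t i - run n m U \<phi>0 t i)
     \<le> (\<Sum>k<t. nrm (basis_set n m) (\<lambda>i. query \<phi> (run n m U \<phi>0 k) i - query \<phi>0 (run n m U \<phi>0 k) i))"
proof (induction t)
  case 0
  have "(\<lambda>i. run n m U \<phi> 0 i - run n m U \<phi>0 0 i) = (\<lambda>i. 0)" by simp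
  then show ?case by (simp add: nrm_def L2_set_def)
next
  case (Suc t)
  let ?B = "basis_set n m"
  let ?x = "run n m U \<phi> t" and ?y = "run n m U \<phi>0 t"
  have u: "unitary_on ?B (U (Suc t))" using U Suc.prems by blast
  have IH: "nrm ?B (\<lambda>i. ?x i - ?y i)
     \<le> (\<Sum>k<t. nrm ?B (\<lambda>i. query \<phi> (run n m U \<phi>0 k) i - query \<phi>0 (run n m U \<phi>0 k) i))"
    using Suc.IH Suc.prems by simp
  have e1: "(\<lambda>i. run n m U \<phi> (Suc t) i - run n m U \<phi>0 (Suc t) i)
      = apply_op ?B (U (Suc t)) (\<lambda>j. query \<phi> ?x j - query \<phi>0 ?y j)"
    by (rule ext) (simp only: run.simps apply_op_diff)
  have t1: "nrm ?B (\<lambda>i. run n m U \<phi> (Suc t) i - run n m U \<phi>0 (Suc t) i)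
      = nrm ?B (\<lambda>j. query \<phi> ?x j - query \<phi>0 ?y j)"
    unfolding e1 by (rule apply_op_nrm[OF finite_basis u])
  have t2: "nrm ?B (\<lambda>j. query \<phi> ?x j - query \<phi>0 ?y j) \<le> nrm ?B (\<lambda>j. query \<phi> ?x j - query \<phi> ?y j) + nrm ?B (\<lambda>j. query \<phi> ?y j - query \<phi>0 ?y j)"
    by (rule nrm_sub_tri)
  have e2: "(\<lambda>j. query \<phi> ?x j - query \<phi> ?y j) = query \<phi> (\<lambda>j. ?x j - ?y j)"
    by (simp only: query_hq')
  have t3: "nrm ?B (query \<phi> (\<lambda>j. ?x j - ?y j)) = nrm ?B (\<lambda>j. ?x j - ?y j)" by (rule query_nrm[OF r1])
  have sS: "(\<Sum>k<Suc t. nrm ?B (\<lambda>i. query \<phi> (run n m U \<phi>0 k) i - query \<phi>0 (run n m U \<phi>0 k) i))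
     = (\<Sum>k<t. nrm ?B (\<lambda>i. query \<phi> (run n m U \<phi>0 k) i - query \<phi>0 (run n m U \<phi>0 k) i))
       + nrm ?B (\<lambda>j. query \<phi> ?y j - query \<phi>0 ?y j)"
    by (rule sum.lessThan_Suc)
  show ?case unfolding sS using t1 t2[unfolded e2] t3 IH by linarith
qed

lemma run_nrm:
  assumes r: "rng n \<phi>" and m: "m \<ge> 1"
    and U: "\<forall>t\<le>T. unitary_on (basis_set n m) (U t)"
  shows "t \<le> T \<Longrightarrow> nrm (basis_set n m) (run n m U \<phi> t) = 1"
proof (induction t)
  case 0
  let ?B = "basis_set n m"
  let ?d = "\<lambda>i::idx. if i = (False, 0, 0, 0) then (1::complex) else 0"
  have u: "unitary_on ?B (U 0)" using U by blast
  have mem: "(False, 0, 0, 0) \<in> ?B" using m by (simp add: basis_set_def)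
  have "nrm ?B (run n m U \<phi> 0) = nrm ?B (apply_op ?B (U 0) ?d)" by (simp only: run.simps)
  also have "\<dots> = nrm ?B ?d" by (rule apply_op_nrm[OF finite_basis u])
  also have "\<dots> = 1" unfolding nrm_def L2_set_def
  proof -
    have "(\<Sum>i\<in>?B. (cmod (?d i))^2) = (\<Sum>i\<in>?B. if i = (False, 0, 0, 0) then 1 else 0)"
      by (intro sum.cong) auto
    also have "\<dots> = 1" using mem finite_basis[of n m] by simp
    finally show "sqrt (\<Sum>i\<in>?B. (cmod (?d i))^2) = 1" by simp
  qed
  finally show ?case .
next
  case (Suc t)
  let ?B = "basis_set n m"
  have u: "unitary_on ?B (U (Suc t))" using U Suc.prems by blast
  have "nrm ?B (run n m U \<phi> (Suc t)) = nrm ?B (apply_op ?B (U (Suc t)) (query \<phi> (run n m U \<phi> t)))"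
    by (simp only: run.simps)
  also have "\<dots> = nrm ?B (query \<phi> (run n m U \<phi> t))" by (rule apply_op_nrm[OF finite_basis u])
  also have "\<dots> = nrm ?B (run n m U \<phi> t)" by (rule query_nrm[OF r])
  also have "\<dots> = 1" using Suc by simp
  finally show ?case .
qed

lemma cs_sum:
  fixes a :: "nat \<Rightarrow> real"
  shows "(\<Sum>z<M. a z) \<le> sqrt (real M) * sqrt (\<Sum>z<M. (a z)^2)"
proof -
  have "(\<Sum>z<M. a z) \<le> (\<Sum>z<M. \<bar>a z\<bar> * \<bar>1\<bar>)" by (intro sum_mono) simp
  also have "\<dots> \<le> L2_set a {..<M} * L2_set (\<lambda>_. 1) {..<M}" by (rule L2_set_mult_ineq)
  also have "\<dots> = sqrt (real M) * sqrt (\<Sum>z<M. (a z)^2)"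
    by (simp add: L2_set_constant L2_set_def)
  finally show ?thesis .
qed

lemma sum_disj_le:
  fixes f :: "'a \<Rightarrow> real"
  assumes "finite B" "finite Z" "\<And>z. z \<in> Z \<Longrightarrow> A z \<subseteq> B"
    "\<And>z z'. z \<in> Z \<Longrightarrow> z' \<in> Z \<Longrightarrow> z \<noteq> z' \<Longrightarrow> A z \<inter> A z' = {}"
    "\<And>i. 0 \<le> f i"
  shows "(\<Sum>z\<in>Z. \<Sum>i\<in>A z. f i) \<le> (\<Sum>i\<in>B. f i)"
proof -
  have fin: "\<forall>z\<in>Z. finite (A z)" using assms(1,3) finite_subset by blast
  have "(\<Sum>z\<in>Z. \<Sum>i\<in>A z. f i) = (\<Sum>i\<in>\<Union>(A ` Z). f i)"
    by (rule sum.UNION_disjoint[symmetric]) (use assms fin in auto)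
  also have "\<dots> \<le> (\<Sum>i\<in>B. f i)" using assms by (intro sum_mono2) auto
  finally show ?thesis .
qed



lemma Xpairs_FJ:
  assumes c: "c \<ge> 1" and p: "p = 2^c" and J: "J \<subseteq> {..<q}" and q: "q \<le> p"
    and R: "q * p \<le> 2^(r+c)" and e: "p + 1 < 2^(r+c)"
  shows "Xpairs r c (FJ p J) = (\<lambda>j. (j * p, j)) ` J"
proof -
  have "(2::nat)^1 \<le> 2^c" by (rule power_increasing) (use c in simp_all)
  then have p2: "p \<ge> 2" using p by simp
  have pm: "(p+1) mod p = 1" using p2 by (rule pm_lemma)
  have z: "x = 0" if "x mod p = 0" "x < p" for x using that by simp
  show ?thesis
  proof (intro set_eqI iffI)
    fix xy assume xy: "xy \<in> Xpairs r c (FJ p J)"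
    obtain x y where xy': "xy = (x, y)" by (cases xy)
    have x: "x < 2^(r+c)" "x mod p = 0" and y: "y < p" and f: "FJ p J x = y"
      using xy unfolding xy' p Xpairs_def X1_def X2_def bitstrings_def by auto
    show "xy \<in> (\<lambda>j. (j * p, j)) ` J"
    proof (cases "x div p \<in> J")
      case True
      then have "FJ p J x = x div p" using x(2) by (intro FJ1)
      then have "y = x div p" using f by simp
      moreover have "x = (x div p) * p"
      proof -
        have "x = x div p * p + x mod p" by (rule div_mult_mod_eq[symmetric])
        then show ?thesis using x(2) by simp
      qed
      ultimately have "xy = (\<lambda>j. (j * p, j)) (x div p)" using xy' by simp
      then show ?thesis using True by blast
    next
      case False
      have h1: "\<not> (x mod p = 0 \<and> x div p \<in> J)" using False by simp
      show ?thesis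
      proof (cases "x = 0")
        case True
        then have "0 \<notin> J" using False by simp
        then have "FJ p J x = p + 1" using True FJ_0[OF p2] by simp
        then show ?thesis using f y by simp
      next
        case x0: False
        have h2: "\<not> (x < p \<and> x \<in> J)" using z[OF x(2)] x0 by blast
        have h3: "x \<noteq> p + 1" using x(2) pm by auto
        have "FJ p J x = x" by (rule FJ5[OF h1 h2 x0 h3])
        then have "x < p" using f y by simp
        then show ?thesis using z[OF x(2)] x0 by blast
      qed
    qed
  next
    fix xy assume "xy \<in> (\<lambda>j. (j * p, j)) ` J"
    then obtain j where j: "j \<in> J" "xy = (j * p, j)" by blast
    have jq: "j < q" using j J by auto
    then have "j * p < q * p" by (rule mult_less_mono1) (use p2 in simp)
    then have a: "j * p < 2^(r+c)" using R by linarith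
    have b: "j < p" using jq q by simp
    have "(j * p) mod p = 0" "(j * p) div p = j" using p2 by simp_all
    then have fj: "FJ p J (j * p) = j" using j(1) by (simp add: FJ1)
    have d: "j < 2^(r+c)" using b e by linarith
    have "(j * p) mod 2^c = 0" using p by simp
    moreover have "j < 2^c" using b p by simp
    ultimately show "xy \<in> Xpairs r c (FJ p J)"
      unfolding j(2) Xpairs_def X1_def X2_def bitstrings_def using a d fj by simp
  qed
qed

lemma J_sub:
  fixes z M K N :: nat
  assumes "z < M" "M * K \<le> N"
  shows "{z*K..<z*K+K} \<subseteq> {..<N}"
proof -
  have "z * K + K = (z+1) * K" by simp
  also have "\<dots> \<le> M * K" using assms(1) by (intro mult_le_mono1) simp
  finally show ?thesis using assms(2) by auto
qed

lemma J_disj: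
  fixes z z' K :: nat
  assumes "z \<noteq> z'"
  shows "{z*K..<z*K+K} \<inter> {z'*K..<z'*K+K} = {}"
proof -
  have *: "{a*K..<a*K+K} \<inter> {b*K..<b*K+K} = {}" if "a < b" for a b :: nat
  proof -
    have "a * K + K = (a+1) * K" by simp
    also have "\<dots> \<le> b * K" using that by (intro mult_le_mono1) simp
    finally show ?thesis by auto
  qed
  show ?thesis
  proof (cases "z < z'")
    case True then show ?thesis by (rule *)
  next
    case False then have "z' < z" using assms by simp
    then have "{z'*K..<z'*K+K} \<inter> {z*K..<z*K+K} = {}" by (rule *)
    then show ?thesis by blast
  qed
qed

theorem lemma4:
  fixes r c K T m :: nat and \<epsilon> :: real
    and U :: "nat \<Rightarrow> qop" and out :: "idx \<Rightarrow> nat \<times> nat"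
  assumes "r \<ge> 1" and "c \<ge> 1"
    and "1 \<le> K" and "K \<le> 2 ^ min r c"
    and "m \<ge> 1"
    and "\<forall>t\<le>T. unitary_on (basis_set (r + c) m) (U t)"
    and "\<epsilon> > 0"
    and "\<forall>\<phi>. \<phi> permutes {..<2^(r + c)} \<and> card (Xpairs r c \<phi>) = K \<longrightarrow>
           success_prob (r + c) m T U out \<phi> (Xpairs r c \<phi>) \<ge> \<epsilon>"
  shows "\<epsilon> \<le> 8 * (real T + 1)^2 * real K / 2 ^ min r c"
proof -
  note r1 = assms(1) and c1 = assms(2) and K1 = assms(3) and KN = assms(4) and m1 = assms(5)
    and U = assms(6) and eps = assms(7) and hyp = assms(8)
  define n where "n = r + c"
  define p :: nat where "p = 2^c"
  define N :: nat where "N = 2 ^ min r c"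
  define M where "M = N div K"
  define J where "J z = {z*K..<z*K+K}" for z
  define \<phi> where "\<phi> z = FJ p (J z)" for z
  define \<phi>0 where "\<phi>0 = FJ p {}"
  define B where "B = basis_set n m"
  define \<chi> where "\<chi> k = run n m U \<phi>0 k" for k
  define A where "A z = {i\<in>B. out i \<in> Xpairs r c (\<phi> z)}" for z
  define S where "S z = {i\<in>B. fst (snd i) \<in> SJ p (J z)}" for z
  define D where "D z k = nrm B (\<lambda>i. query (\<phi> z) (\<chi> k) i - query \<phi>0 (\<chi> k) i)" for z k
  have p2: "p \<ge> 2" unfolding p_def using c1
    by (metis power_increasing[of 1 c "2::nat"] power_one_right one_le_numeral)
  have Np: "N \<le> p" unfolding N_def p_def by (intro power_increasing) auto
  have Nr: "N \<le> 2^r" unfolding N_def by (intro power_increasing) auto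
  have NpR: "N * p \<le> 2^n" unfolding n_def p_def using Nr by (simp add: power_add)
  have pR: "p + 1 < 2^n"
  proof -
    have "p + 1 < 2 * p" using p2 by simp
    also have "2 * p = 2^(c+1)" unfolding p_def by simp
    also have "\<dots> \<le> 2^n" unfolding n_def using r1 by (intro power_increasing) auto
    finally show ?thesis .
  qed
  have KM: "M * K \<le> N" unfolding M_def by simp
  have M1: "M \<ge> 1"
  proof -
    have "0 < N div K" using K1 KN unfolding N_def by (simp add: div_greater_zero_iff)
    then show ?thesis unfolding M_def by simp
  qed
  have NKM: "N < 2 * K * M"
  proof -
    have a1: "N = M * K + N mod K" unfolding M_def by simp
    have a2: "N mod K < K" using K1 by simp
    have a3: "1 * K \<le> M * K" using M1 by (rule mult_le_mono1)
    have "N < M * K + M * K" using a1 a2 a3 by linarith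
    also have "\<dots> = 2 * K * M" by simp
    finally show ?thesis .
  qed
  have JN: "J z \<subseteq> {..<N}" if "z < M" for z unfolding J_def using that KM by (rule J_sub)
  have Jp: "z < M \<Longrightarrow> J z \<subseteq> {..<p}" for z using JN Np by fastforce
  have Jd: "z \<noteq> z' \<Longrightarrow> J z \<inter> J z' = {}" for z z' unfolding J_def by (rule J_disj)
  have rngF: "rng n (FJ p J')" if "J' \<subseteq> {..<N}" for J'
  proof -
    have "J' \<subseteq> {..<p}" using that Np by fastforce
    then show ?thesis unfolding rng_def using FJ_inv[OF p2] FJ_range[OF p2 that Np NpR pR] by auto
  qed
  have rng\<phi>: "z < M \<Longrightarrow> rng n (\<phi> z)" for z unfolding \<phi>_def using JN rngF by blast
  have rng0: "rng n \<phi>0" unfolding \<phi>0_def by (rule rngF) simp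
  have U': "\<forall>t\<le>T. unitary_on B (U t)" using U unfolding B_def n_def .
  have \<chi>1: "k \<le> T \<Longrightarrow> nrm B (\<chi> k) = 1" for k
    unfolding \<chi>_def B_def using run_nrm[OF rng0 m1 U'[unfolded B_def]] by blast
  have Xp: "z < M \<Longrightarrow> Xpairs r c (\<phi> z) = (\<lambda>j. (j * p, j)) ` J z" for z
    unfolding \<phi>_def using Xpairs_FJ[OF c1 p_def JN Np] NpR pR unfolding n_def by blast
  have cardX: "z < M \<Longrightarrow> card (Xpairs r c (\<phi> z)) = K" for z
  proof -
    assume z: "z < M"
    have "inj_on (\<lambda>j. (j * p, j)) (J z)" by (auto simp: inj_on_def)
    then show ?thesis using Xp[OF z] by (simp add: card_image J_def)
  qed
  have perm: "z < M \<Longrightarrow> \<phi> z permutes {..<2^(r+c)}" for z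
    unfolding \<phi>_def using FJ_permutes[OF p2 JN Np NpR pR] unfolding n_def by blast
  have step1: "sqrt \<epsilon> \<le> nrm (A z) (\<chi> T) + (\<Sum>k<T. D z k)" if z: "z < M" for z
  proof -
    let ?\<psi> = "run n m U (\<phi> z) T"
    have "\<epsilon> \<le> success_prob (r + c) m T U out (\<phi> z) (Xpairs r c (\<phi> z))"
      using hyp perm[OF z] cardX[OF z] by blast
    also have "\<dots> = (nrm (A z) ?\<psi>)^2"
      unfolding success_prob_def nrm_sq A_def B_def n_def by simp
    finally have "sqrt \<epsilon> \<le> sqrt ((nrm (A z) ?\<psi>)^2)" by (rule real_sqrt_le_mono)
    also have "\<dots> = nrm (A z) ?\<psi>" unfolding real_sqrt_abs by (simp add: nrm_def)
    also have "nrm (A z) ?\<psi> \<le> nrm (A z) (\<chi> T) + nrm (A z) (\<lambda>i. ?\<psi> i - \<chi> T i)"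
      using nrm_tri[of "A z" "\<chi> T" "\<lambda>i. ?\<psi> i - \<chi> T i"] by simp
    also have "nrm (A z) (\<lambda>i. ?\<psi> i - \<chi> T i) \<le> nrm B (\<lambda>i. ?\<psi> i - \<chi> T i)"
      unfolding B_def by (rule nrm_mono_set[OF finite_basis]) (auto simp: A_def B_def)
    also have "\<dots> \<le> (\<Sum>k<T. D z k)"
      unfolding D_def \<chi>_def B_def using hybrid[OF rng\<phi>[OF z] rng0 U'[unfolded B_def], of T] by simp
    finally show ?thesis by simp
  qed
  have SA: "(\<Sum>z<M. nrm (A z) (\<chi> T)) \<le> sqrt (real M)"
  proof -
    have "(\<Sum>z<M. (nrm (A z) (\<chi> T))^2) = (\<Sum>z<M. \<Sum>i\<in>A z. (cmod (\<chi> T i))^2)"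
      by (simp add: nrm_sq)
    also have "\<dots> \<le> (\<Sum>i\<in>B. (cmod (\<chi> T i))^2)"
    proof (rule sum_disj_le)
      show "finite B" unfolding B_def by (rule finite_basis)
      show "A z \<subseteq> B" for z unfolding A_def by auto
      fix z z' assume "z \<in> {..<M}" "z' \<in> {..<M}" "z \<noteq> z'"
      then have zz: "z < M" "z' < M" "z \<noteq> z'" by auto
      have "Xpairs r c (\<phi> z) \<inter> Xpairs r c (\<phi> z') = {}"
      proof (rule ccontr)
        assume "Xpairs r c (\<phi> z) \<inter> Xpairs r c (\<phi> z') \<noteq> {}"
        then obtain q where q: "q \<in> (\<lambda>j. (j * p, j)) ` J z" "q \<in> (\<lambda>j. (j * p, j)) ` J z'"
          unfolding Xp[OF zz(1)] Xp[OF zz(2)] by blast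
        then have "snd q \<in> J z" "snd q \<in> J z'" by auto
        then show False using Jd[OF zz(3)] by blast
      qed
      then show "A z \<inter> A z' = {}" unfolding A_def by blast
    qed auto
    also have "\<dots> = 1" using \<chi>1[of T] by (simp add: nrm_sq[symmetric])
    finally have "(\<Sum>z<M. (nrm (A z) (\<chi> T))^2) \<le> 1" .
    then have "sqrt (\<Sum>z<M. (nrm (A z) (\<chi> T))^2) \<le> 1" by simp
    then have "sqrt (real M) * sqrt (\<Sum>z<M. (nrm (A z) (\<chi> T))^2) \<le> sqrt (real M) * 1"
      by (rule mult_left_mono) simp
    then show ?thesis using cs_sum[of "\<lambda>z. nrm (A z) (\<chi> T)" M] by linarith
  qed
  have SD: "(\<Sum>z<M. D z k) \<le> 2 * sqrt (real M)" if k: "k < T" for k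
  proof -
    have "(\<Sum>z<M. (D z k)^2) \<le> (\<Sum>z<M. 4 * (\<Sum>i\<in>S z. (cmod (\<chi> k i))^2))"
    proof (rule sum_mono)
      fix z assume z: "z \<in> {..<M}"
      have zM: "z < M" using z by simp
      have same: "\<phi> z a = \<phi>0 a \<and> inv (\<phi> z) a = inv \<phi>0 a" if a: "a \<notin> SJ p (J z)" for a
      proof -
        have e1: "\<phi> z a = \<phi>0 a" unfolding \<phi>_def \<phi>0_def by (rule FJ_same[OF p2 a])
        have i1: "inv (\<phi> z) = \<phi> z" unfolding \<phi>_def by (rule FJ_inv[OF p2 Jp[OF zM]])
        have i2: "inv \<phi>0 = \<phi>0" unfolding \<phi>0_def by (rule FJ_inv[OF p2]) simp
        show ?thesis using e1 unfolding i1 i2 by simp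
      qed
      show "(D z k)^2 \<le> 4 * (\<Sum>i\<in>S z. (cmod (\<chi> k i))^2)"
        unfolding D_def S_def B_def
        by (rule query_diff_bound[OF rng\<phi> rng0 same]) (use z in auto)
    qed
    also have "\<dots> = 4 * (\<Sum>z<M. \<Sum>i\<in>S z. (cmod (\<chi> k i))^2)" by (simp add: sum_distrib_left)
    also have "\<dots> \<le> 4 * (\<Sum>i\<in>B. (cmod (\<chi> k i))^2)"
    proof (intro mult_left_mono sum_disj_le)
      show "finite B" unfolding B_def by (rule finite_basis)
      show "S z \<subseteq> B" for z unfolding S_def by auto
      fix z z' assume "z \<in> {..<M}" "z' \<in> {..<M}" "z \<noteq> z'"
      then have "SJ p (J z) \<inter> SJ p (J z') = {}" using SJ_disj[OF p2 Jp Jp Jd] by auto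
      then show "S z \<inter> S z' = {}" unfolding S_def by auto
    qed auto
    also have "\<dots> = 4" using \<chi>1[of k] k by (simp add: nrm_sq[symmetric])
    finally have "(\<Sum>z<M. (D z k)^2) \<le> 4" .
    then have "sqrt (\<Sum>z<M. (D z k)^2) \<le> 2" by (metis real_sqrt_le_mono real_sqrt_four)
    then have "sqrt (real M) * sqrt (\<Sum>z<M. (D z k)^2) \<le> sqrt (real M) * 2"
      by (rule mult_left_mono) simp
    then show ?thesis using cs_sum[of "\<lambda>z. D z k" M] by linarith
  qed
  have "real M * sqrt \<epsilon> = (\<Sum>z<M. sqrt \<epsilon>)" by simp
  also have "\<dots> \<le> (\<Sum>z<M. nrm (A z) (\<chi> T) + (\<Sum>k<T. D z k))" by (intro sum_mono step1) simp
  also have "\<dots> = (\<Sum>z<M. nrm (A z) (\<chi> T)) + (\<Sum>k<T. \<Sum>z<M. D z k)"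
    by (simp add: sum.distrib sum.swap[of _ "{..<M}"])
  also have "\<dots> \<le> sqrt (real M) + (\<Sum>k<T. 2 * sqrt (real M))"
    by (intro add_mono SA sum_mono SD) simp
  also have "\<dots> = sqrt (real M) * (1 + 2 * real T)" by (simp add: algebra_simps)
  finally have main: "real M * sqrt \<epsilon> \<le> sqrt (real M) * (1 + 2 * real T)" .
  have sM: "sqrt (real M) > 0" using M1 by simp
  have eqM: "sqrt (real M) * (sqrt (real M) * sqrt \<epsilon>) = real M * sqrt \<epsilon>"
    by (simp add: mult.assoc[symmetric])
  have "sqrt (real M) * (sqrt (real M) * sqrt \<epsilon>) \<le> sqrt (real M) * (1 + 2 * real T)"
    unfolding eqM by (rule main)
  then have "sqrt (real M) * sqrt \<epsilon> \<le> 1 + 2 * real T"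
    by (rule mult_left_le_imp_le) (rule sM)
  then have sq: "(sqrt (real M) * sqrt \<epsilon>)^2 \<le> (1 + 2 * real T)^2"
    by (rule power_mono) (use eps in simp)
  have "(sqrt (real M) * sqrt \<epsilon>)^2 = (sqrt (real M))^2 * (sqrt \<epsilon>)^2" by (rule power_mult_distrib)
  also have "(sqrt (real M))^2 = real M" by (rule real_sqrt_pow2) simp
  also have "(sqrt \<epsilon>)^2 = \<epsilon>" by (rule real_sqrt_pow2) (use eps in simp)
  finally have Meps: "real M * \<epsilon> \<le> (1 + 2 * real T)^2" using sq by simp
  have NK0: "real N \<le> real (2 * K * M)" using NKM by linarith
  have NK: "real N \<le> 2 * real K * real M" using NK0 by simp
  have "\<epsilon> * real N \<le> \<epsilon> * (2 * real K * real M)" using NK eps by (intro mult_left_mono) auto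
  also have "\<dots> = 2 * real K * (real M * \<epsilon>)" by simp
  also have "\<dots> \<le> 2 * real K * (1 + 2 * real T)^2" using Meps by (intro mult_left_mono) auto
  also have "\<dots> \<le> 8 * (real T + 1)^2 * real K"
  proof -
    have "2 * (1 + 2 * real T)^2 \<le> 8 * (real T + 1)^2" by (simp add: power2_eq_square algebra_simps)
    then have "2 * (1 + 2 * real T)^2 * real K \<le> 8 * (real T + 1)^2 * real K"
      by (rule mult_right_mono) simp
    then show ?thesis by (simp add: mult_ac)
  qed
  finally have fin: "\<epsilon> * real N \<le> 8 * (real T + 1)^2 * real K" .
  have Npos: "(0::real) < real N" unfolding N_def by simp
  have "\<epsilon> \<le> 8 * (real T + 1)^2 * real K / real N"
    using fin by (subst pos_le_divide_eq[OF Npos])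
  moreover have "real N = 2 ^ min r c" unfolding N_def by simp
  ultimately show ?thesis by simp
qed


end
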